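(* Assume (C1)–(C3). Let $\alpha\in(0,1)$ and suppose there are $\gamma>0$, $\Gamma>0$ and $r_0\ge0$ such that $$A(x)-\Big(1-\frac{\gamma}{2}\Big)C_0(x)+B_0(x)\le-\Gamma|x|^{\gamma\alpha-\gamma+2},\qquad |x|\ge r_0,$$ and suppose further that $\gamma<2/(1-\alpha)$ and that there is $\Delta\ge1$ with $\Delta^{-1}\le C_0(x)\le\Delta$ for all $|x|\ge r_0$. Then there is $r'\ge r_0$ such that, with $I_0(r):=\int_{r'}^r\frac{\iota_0(s)}{s}ds$ for $r\ge r'$, $$\int_{r'}^\infty\Big(\int_{r'}^u e^{-I_0(v)}dv+1\Big)^\alpha\frac{e^{I_0(u)}}{\gamma_0(u)}du<\infty,$$ i.e. the integrability condition of Theorem 1.1 holds with $x_0=0$, base radius $r'$ and $\varphi(t)=t^\alpha$.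
   Context: Let $b:\mathbb{R}^d\to\mathbb{R}^d$, $\sigma:\mathbb{R}^d\to\mathbb{R}^{d\times n}$ Borel measurable, $\|M\|_{\mathrm{HS}}^2=\mathrm{Tr}\,MM^T$. (C1) for every $r>0$, $\sup_{|x|<r}(|b(x)|+\|\sigma(x)\|_{\mathrm{HS}})<\infty$; (C2) for every $r>0$ there is $\Gamma_r>0$ with $2\langle x-y,b(x)-b(y)\rangle+\|\sigma(x)-\sigma(y)\|^2_{\mathrm{HS}}\le\Gamma_r|x-y|^2$ for $|x|,|y|<r$; (C3) there is $\Gamma>0$ with $2\langle x,b(x)\rangle+\|\sigma(x)\|^2_{\mathrm{HS}}\le\Gamma(1+|x|^2)$. Notation: $c=\sigma\sigma^T$, $A(x)=\frac12\mathrm{Tr}\,c(x)$, $B_0(x)=\langle x,b(x)\rangle$, $C_0(x)=\langle x,c(x)x\rangle/|x|^2$ ($x\ne0$), $\gamma_0(r)=\inf_{|x|=r}C_0(x)$, $\iota_0(r)=\sup_{|x|=r}\frac{2A(x)-C_0(x)+2B_0(x)}{C_0(x)}$. *)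

theory Defs
  imports "HOL-Analysis.Analysis"
begin

(* Coefficients: b :: real^'d => real^'d, sigma :: real^'d => real^'n^'d (a d x n matrix,
   rows indexed by 'd, columns by 'n). *)

definition hs_norm :: "real^'n^'d \<Rightarrow> real" where
  "hs_norm M = sqrt (trace (M ** transpose M))"

definition cmat :: "(real^'d \<Rightarrow> real^'n^'d) \<Rightarrow> real^'d \<Rightarrow> real^'d^'d" where
  "cmat \<sigma> x = \<sigma> x ** transpose (\<sigma> x)"

definition Acoef :: "(real^'d \<Rightarrow> real^'n^'d) \<Rightarrow> real^'d \<Rightarrow> real" where
  "Acoef \<sigma> x = trace (cmat \<sigma> x) / 2"

definition B0 :: "(real^'d \<Rightarrow> real^'d) \<Rightarrow> real^'d \<Rightarrow> real" where
  "B0 b x = x \<bullet> b x"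

(* only meaningful for x \<noteq> 0 *)
definition C0 :: "(real^'d \<Rightarrow> real^'n^'d) \<Rightarrow> real^'d \<Rightarrow> real" where
  "C0 \<sigma> x = (x \<bullet> (cmat \<sigma> x *v x)) / (norm x)^2"

definition gamma0 :: "(real^'d \<Rightarrow> real^'n^'d) \<Rightarrow> real \<Rightarrow> real" where
  "gamma0 \<sigma> r = (INF x\<in>{x. norm x = r}. C0 \<sigma> x)"

definition iota0 :: "(real^'d \<Rightarrow> real^'d) \<Rightarrow> (real^'d \<Rightarrow> real^'n^'d) \<Rightarrow> real \<Rightarrow> real" where
  "iota0 b \<sigma> r = (SUP x\<in>{x. norm x = r}.
      (2 * Acoef \<sigma> x - C0 \<sigma> x + 2 * B0 b x) / C0 \<sigma> x)"

end

theory Submission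
  imports Defs "HOL-Real_Asymp.Real_Asymp"
begin

lemma trace_MMt: "trace (M ** transpose M) = (\<Sum>i\<in>UNIV. \<Sum>j\<in>UNIV. (M$i$j)^2)"
  for M :: "real^'n^'d"
  by (simp add: trace_def matrix_matrix_mult_def transpose_def power2_eq_square)

lemma quad_cmat: "x \<bullet> (cmat \<sigma> x *v x) = (\<Sum>j\<in>UNIV. (\<Sum>i\<in>UNIV. x$i * \<sigma> x$i$j)^2)"
proof -
  have "cmat \<sigma> x *v x = \<sigma> x *v (transpose (\<sigma> x) *v x)"
    unfolding cmat_def by (simp only: matrix_vector_mul_assoc)
  then have "x \<bullet> (cmat \<sigma> x *v x) = (x v* \<sigma> x) \<bullet> (transpose (\<sigma> x) *v x)"
    by (simp add: dot_lmul_matrix)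
  also have "x v* \<sigma> x = transpose (\<sigma> x) *v x"
    by (metis transpose_transpose vector_transpose_matrix)
  also have "(transpose (\<sigma> x) *v x) \<bullet> (transpose (\<sigma> x) *v x) = (\<Sum>j\<in>UNIV. (\<Sum>i\<in>UNIV. x$i * \<sigma> x$i$j)^2)"
    unfolding inner_vec_def matrix_vector_mult_def transpose_def
    by (simp add: power2_eq_square mult.commute)
  finally show ?thesis .
qed

lemma hs_sq: "(hs_norm M)^2 = (\<Sum>i\<in>UNIV. \<Sum>j\<in>UNIV. (M$i$j)^2)"
  for M :: "real^'n^'d"
  unfolding hs_norm_def trace_MMt by (simp add: sum_nonneg)

lemma hs_nonneg: "0 \<le> hs_norm M"
  unfolding hs_norm_def trace_MMt by (simp add: sum_nonneg)

lemma entry_le_hs: "\<bar>M$i$j\<bar> \<le> hs_norm M"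
  for M :: "real^'n^'d"
proof -
  have "(M$i$j)^2 \<le> (\<Sum>j\<in>UNIV. (M$i$j)^2)"
    by (rule member_le_sum) auto
  also have "\<dots> \<le> (\<Sum>i\<in>UNIV. \<Sum>j\<in>UNIV. (M$i$j)^2)"
    by (rule member_le_sum[where f="\<lambda>i. \<Sum>j\<in>UNIV. (M$i$j)^2"]) (auto intro: sum_nonneg)
  finally have "(M$i$j)^2 \<le> (hs_norm M)^2" by (simp add: hs_sq)
  then show ?thesis using hs_nonneg[of M] by (metis abs_le_square_iff abs_of_nonneg)
qed

lemma Acoef_eq: "Acoef \<sigma> x = (\<Sum>i\<in>UNIV. \<Sum>j\<in>UNIV. (\<sigma> x$i$j)^2) / 2"
  unfolding Acoef_def cmat_def trace_MMt ..

lemma Acoef_nonneg: "0 \<le> Acoef \<sigma> x"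
  unfolding Acoef_eq by (simp add: sum_nonneg)

lemma sigma_entry_cont:
  fixes b :: "real^'d \<Rightarrow> real^'d" and \<sigma> :: "real^'d \<Rightarrow> real^'n^'d"
  assumes C1: "\<forall>r>0. \<exists>M. \<forall>x. norm x < r \<longrightarrow> norm (b x) + hs_norm (\<sigma> x) \<le> M"
    and C2: "\<forall>r>0. \<exists>\<Gamma>r>0. \<forall>x y. norm x < r \<longrightarrow> norm y < r \<longrightarrow>
               2 * ((x - y) \<bullet> (b x - b y)) + (hs_norm (\<sigma> x - \<sigma> y))^2 \<le> \<Gamma>r * (norm (x - y))^2"
  shows "continuous (at x0) (\<lambda>y. \<sigma> y $ i $ j)"
proof -
  define r where "r = norm x0 + 1"
  have r: "r > 0" unfolding r_def by (simp add: add_nonneg_pos)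
  obtain M where M: "\<And>x. norm x < r \<Longrightarrow> norm (b x) + hs_norm (\<sigma> x) \<le> M"
    using C1 r by blast
  obtain G where G: "G > 0" "\<And>x y. norm x < r \<Longrightarrow> norm y < r \<Longrightarrow>
       2 * ((x - y) \<bullet> (b x - b y)) + (hs_norm (\<sigma> x - \<sigma> y))^2 \<le> G * (norm (x - y))^2"
    using C2 r by blast
  have bM: "norm (b x) \<le> M" if "norm x < r" for x
    using M[OF that] hs_nonneg[of "\<sigma> x"] by linarith
  have x0r: "norm x0 < r" unfolding r_def by simp
  have bnd: "norm (\<sigma> y $ i $ j - \<sigma> x0 $ i $ j) \<le> sqrt (G * (norm (y - x0))^2 + 4 * M * norm (y - x0))"
    if "dist y x0 < 1" for y
  proof -
    have "norm y \<le> norm (y - x0) + norm x0" using norm_triangle_ineq[of "y - x0" x0] by simp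
    then have yr: "norm y < r" using that unfolding r_def dist_norm by linarith
    have cs: "\<bar>(y - x0) \<bullet> (b y - b x0)\<bar> \<le> norm (y - x0) * norm (b y - b x0)"
      by (rule Cauchy_Schwarz_ineq2)
    have "norm (b y - b x0) \<le> 2 * M" using bM[OF yr] bM[OF x0r] norm_triangle_ineq4[of "b y" "b x0"] by linarith
    then have "norm (y - x0) * norm (b y - b x0) \<le> 2 * M * norm (y - x0)"
      by (simp add: mult_left_mono mult.commute)
    then have "(hs_norm (\<sigma> y - \<sigma> x0))^2 \<le> G * (norm (y - x0))^2 + 4 * M * norm (y - x0)"
      using G(2)[OF yr x0r] cs unfolding abs_le_iff by linarith
    then have "hs_norm (\<sigma> y - \<sigma> x0) \<le> sqrt (G * (norm (y - x0))^2 + 4 * M * norm (y - x0))"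
      using hs_nonneg real_le_rsqrt by blast
    moreover have "\<bar>(\<sigma> y - \<sigma> x0) $ i $ j\<bar> \<le> hs_norm (\<sigma> y - \<sigma> x0)" by (rule entry_le_hs)
    ultimately show ?thesis by simp
  qed
  have lim0: "((\<lambda>y. sqrt (G * (norm (y - x0))^2 + 4 * M * norm (y - x0))) \<longlongrightarrow> 0) (at x0)"
  proof -
    have "((\<lambda>y. sqrt (G * (norm (y - x0))^2 + 4 * M * norm (y - x0))) \<longlongrightarrow>
            sqrt (G * (norm (x0 - x0))^2 + 4 * M * norm (x0 - x0))) (at x0)"
      by (intro tendsto_intros tendsto_ident_at)
    then show ?thesis by simp
  qed
  have ev: "eventually (\<lambda>y. norm (\<sigma> y $ i $ j - \<sigma> x0 $ i $ j) \<le> sqrt (G * (norm (y - x0))^2 + 4 * M * norm (y - x0))) (at x0)"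
    unfolding eventually_at by (rule exI[of _ 1]) (use bnd in auto)
  have "((\<lambda>y. \<sigma> y $ i $ j - \<sigma> x0 $ i $ j) \<longlongrightarrow> 0) (at x0)"
    by (rule Lim_null_comparison[OF ev lim0])
  then show ?thesis unfolding continuous_at by (simp add: LIM_zero_iff)
qed
lemma cont_coefs:
  fixes b :: "real^'d \<Rightarrow> real^'d" and \<sigma> :: "real^'d \<Rightarrow> real^'n^'d"
  assumes C1: "\<forall>r>0. \<exists>M. \<forall>x. norm x < r \<longrightarrow> norm (b x) + hs_norm (\<sigma> x) \<le> M"
    and C2: "\<forall>r>0. \<exists>\<Gamma>r>0. \<forall>x y. norm x < r \<longrightarrow> norm y < r \<longrightarrow>
               2 * ((x - y) \<bullet> (b x - b y)) + (hs_norm (\<sigma> x - \<sigma> y))^2 \<le> \<Gamma>r * (norm (x - y))^2"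
  shows "continuous (at x) (Acoef \<sigma>)" and "x \<noteq> 0 \<Longrightarrow> continuous (at x) (C0 \<sigma>)"
proof -
  have e: "\<And>y i j. continuous (at y) (\<lambda>y. \<sigma> y $ i $ j)"
    by (rule sigma_entry_cont[OF C1 C2])
  have "Acoef \<sigma> = (\<lambda>x. (\<Sum>i\<in>UNIV. \<Sum>j\<in>UNIV. (\<sigma> x$i$j)^2) / 2)"
    by (rule ext) (rule Acoef_eq)
  then show "continuous (at x) (Acoef \<sigma>)"
    by (simp add: e continuous_intros)
  assume x: "x \<noteq> 0"
  have "C0 \<sigma> = (\<lambda>x. (\<Sum>j\<in>UNIV. (\<Sum>i\<in>UNIV. x$i * \<sigma> x$i$j)^2) / (norm x)^2)"
    by (rule ext) (simp add: C0_def quad_cmat)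
  then show "continuous (at x) (C0 \<sigma>)"
    using x by (simp add: e continuous_intros)
qed
lemma leftopen_borel:
  fixes S :: "real set"
  assumes "\<And>t. t \<in> S \<Longrightarrow> \<exists>h>0. \<forall>s. t - h < s \<and> s \<le> t \<longrightarrow> s \<in> S"
  shows "S \<in> sets borel"
proof -
  obtain h where h: "\<And>t. t\<in>S \<Longrightarrow> h t > 0 \<and> (\<forall>s. t - h t < s \<and> s \<le> t \<longrightarrow> s \<in> S)"
    using assms by metis
  define T where "T = S - interior S"
  have int: "{t - h t<..<t} \<subseteq> interior S" if "t \<in> S" for t
    using h[OF that] by (intro interior_maximal) auto
  have "\<forall>t\<in>T. \<exists>r. r \<in> \<rat> \<and> t - h t < r \<and> r < t"
  proof
    fix t assume "t \<in> T"
    then have "h t > 0" using h unfolding T_def by blast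
    then have "t - h t < t" by simp
    then show "\<exists>r. r \<in> \<rat> \<and> t - h t < r \<and> r < t" using Rats_dense_in_real by blast
  qed
  then obtain q where q: "\<And>t. t \<in> T \<Longrightarrow> q t \<in> \<rat> \<and> t - h t < q t \<and> q t < t"
    by metis
  have key: "q t1 \<noteq> q t2" if "t1 \<in> T" "t2 \<in> T" "t1 < t2" for t1 t2
  proof (cases "t1 \<le> t2 - h t2")
    case True
    then show ?thesis using q[OF that(1)] q[OF that(2)] by linarith
  next
    case False
    then have "t1 \<in> {t2 - h t2<..<t2}" using that by auto
    then have "t1 \<in> interior S" using int[of t2] that unfolding T_def by blast
    then show ?thesis using that(1) unfolding T_def by blast
  qed
  have "inj_on q T"
    by (rule inj_onI) (metis key linorder_neqE_linordered_idom)
  moreover have "countable (q ` T)"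
    using q countable_rat by (blast intro: countable_subset)
  ultimately have cT: "countable T" by (rule countable_image_inj_on[rotated])
  have "T \<in> sets borel" by (rule sets.countable[OF _ cT]) auto
  moreover have "interior S \<in> sets borel" by (rule borel_open) simp
  moreover have "S = interior S \<union> T" unfolding T_def using interior_subset by blast
  ultimately show ?thesis by (metis sets.Un)
qed

lemma borel_to_lebesgue_on:
  fixes f :: "real \<Rightarrow> real"
  assumes "f \<in> borel_measurable borel"
  shows "f \<in> borel_measurable (lebesgue_on S)"
proof -
  have "f \<in> borel_measurable lborel" using assms by simp
  then have "f \<in> borel_measurable lebesgue" by (rule measurable_completion)
  then show ?thesis by (rule measurable_restrict_space1)
qed
locale P25 =
  fixes b :: "real^'d \<Rightarrow> real^'d" and \<sigma> :: "real^'d \<Rightarrow> real^'n^'d"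
    and \<alpha> \<gamma> \<Gamma> r0 \<Delta> :: real
  assumes C1: "\<forall>r>0. \<exists>M. \<forall>x. norm x < r \<longrightarrow> norm (b x) + hs_norm (\<sigma> x) \<le> M"
    and C2: "\<forall>r>0. \<exists>\<Gamma>r>0. \<forall>x y. norm x < r \<longrightarrow> norm y < r \<longrightarrow>
               2 * ((x - y) \<bullet> (b x - b y)) + (hs_norm (\<sigma> x - \<sigma> y))^2 \<le> \<Gamma>r * (norm (x - y))^2"
    and alpha: "0 < \<alpha>" "\<alpha> < 1"
    and gamma: "0 < \<gamma>" "\<gamma> < 2 / (1 - \<alpha>)"
    and Gamma: "0 < \<Gamma>"
    and r0: "0 \<le> r0"
    and drift: "\<And>x. x \<noteq> 0 \<Longrightarrow> norm x \<ge> r0 \<Longrightarrow>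
        Acoef \<sigma> x - (1 - \<gamma> / 2) * C0 \<sigma> x + B0 b x \<le> - \<Gamma> * norm x powr (\<gamma> * \<alpha> - \<gamma> + 2)"
    and Delta: "1 \<le> \<Delta>"
    and ellipt: "\<And>x. x \<noteq> 0 \<Longrightarrow> norm x \<ge> r0 \<Longrightarrow> 1 / \<Delta> \<le> C0 \<sigma> x \<and> C0 \<sigma> x \<le> \<Delta>"
begin

definition g where "g x = (2 * Acoef \<sigma> x - C0 \<sigma> x + 2 * B0 b x) / C0 \<sigma> x"
definition p where "p = \<gamma> * \<alpha> - \<gamma> + 2"

lemma p_pos: "0 < p"
proof -
  have "\<gamma> * (1 - \<alpha>) < 2" using gamma alpha by (simp add: field_simps)
  then show ?thesis unfolding p_def by (simp add: algebra_simps)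
qed

lemma sphere_ne: "0 \<le> r \<Longrightarrow> norm (r *\<^sub>R axis undefined 1 :: real^'d) = r"
  by simp

lemma C0pos: "x \<noteq> 0 \<Longrightarrow> r0 \<le> norm x \<Longrightarrow> 0 < C0 \<sigma> x"
  using ellipt[of x] Delta by (smt (verit) divide_pos_pos)

lemma g_upper:
  assumes x: "x \<noteq> 0" "r0 \<le> norm x"
  shows "g x \<le> (1 - \<gamma>) - 2 * \<Gamma> * norm x powr p / \<Delta>"
proof -
  let ?C = "C0 \<sigma> x" and ?n = "norm x powr p"
  have C: "0 < ?C" "?C \<le> \<Delta>" using C0pos[OF x] ellipt[OF x] by auto
  have "2 * Acoef \<sigma> x - ?C + 2 * B0 b x \<le> (1 - \<gamma>) * ?C - 2 * \<Gamma> * ?n"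
    using drift[OF x] unfolding p_def by (simp add: algebra_simps)
  then have "g x \<le> ((1 - \<gamma>) * ?C - 2 * \<Gamma> * ?n) / ?C"
    unfolding g_def using C by (simp add: divide_right_mono)
  also have "\<dots> = (1 - \<gamma>) - 2 * \<Gamma> * ?n / ?C" using C by (simp add: field_simps)
  also have "2 * \<Gamma> * ?n / \<Delta> \<le> 2 * \<Gamma> * ?n / ?C"
    using C Gamma by (intro divide_left_mono) auto
  then have "(1 - \<gamma>) - 2 * \<Gamma> * ?n / ?C \<le> (1 - \<gamma>) - 2 * \<Gamma> * ?n / \<Delta>" by simp
  finally show ?thesis .
qed

lemma iota_eq: "iota0 b \<sigma> r = (SUP x\<in>{x. norm x = r}. g x)"
  unfolding iota0_def g_def ..

lemma gsphere_ne: "0 \<le> r \<Longrightarrow> {x::real^'d. norm x = r} \<noteq> {}"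
  using sphere_ne by blast

lemma bdd_g: "0 < r \<Longrightarrow> r0 \<le> r \<Longrightarrow> bdd_above (g ` {x. norm x = r})"
  by (rule bdd_aboveI[of _ "1 - \<gamma>"]) (use g_upper Gamma Delta in \<open>fastforce intro!: order.trans[OF g_upper]\<close>)

lemma iota_ge: "0 < r \<Longrightarrow> r0 \<le> r \<Longrightarrow> norm x = r \<Longrightarrow> g x \<le> iota0 b \<sigma> r"
  unfolding iota_eq by (rule cSUP_upper[OF _ bdd_g]) auto

lemma iota_upper:
  assumes r: "0 < r" "r0 \<le> r"
  shows "iota0 b \<sigma> r \<le> (1 - \<gamma>) - 2 * \<Gamma> * r powr p / \<Delta>"
  unfolding iota_eq
proof (rule cSUP_least)
  show "{x::real^'d. norm x = r} \<noteq> {}" using gsphere_ne r by simp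
  fix x :: "real^'d" assume "x \<in> {x. norm x = r}"
  then show "g x \<le> (1 - \<gamma>) - 2 * \<Gamma> * r powr p / \<Delta>" using g_upper[of x] r by force
qed

lemma bdd_C0: "0 < r \<Longrightarrow> r0 \<le> r \<Longrightarrow> bdd_below (C0 \<sigma> ` {x. norm x = r})"
  by (rule bdd_belowI[of _ "1/\<Delta>"]) (use ellipt in force)

lemma gamma_le: "0 < r \<Longrightarrow> r0 \<le> r \<Longrightarrow> norm x = r \<Longrightarrow> gamma0 \<sigma> r \<le> C0 \<sigma> x"
  unfolding gamma0_def by (rule cINF_lower[OF bdd_C0]) auto

lemma gamma_lower:
  assumes r: "0 < r" "r0 \<le> r"
  shows "1 / \<Delta> \<le> gamma0 \<sigma> r"
  unfolding gamma0_def
proof (rule cINF_greatest)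
  show "{x::real^'d. norm x = r} \<noteq> {}" using gsphere_ne r by simp
  fix x :: "real^'d" assume "x \<in> {x. norm x = r}"
  then show "1 / \<Delta> \<le> C0 \<sigma> x" using ellipt[of x] r by force
qed

end
context P25 begin

lemma iota_lower: "\<exists>L. \<forall>r. 0 < r \<and> r0 \<le> r \<and> r \<le> R \<longrightarrow> L \<le> iota0 b \<sigma> r"
proof -
  define R' where "R' = max R 0 + 1"
  have R': "R' > 0" unfolding R'_def by linarith
  obtain M where M: "\<And>x. norm x < R' \<Longrightarrow> norm (b x) + hs_norm (\<sigma> x) \<le> M"
    using C1 R' by blast
  have bM: "norm (b x) \<le> M" if "norm x < R'" for x
    using M[OF that] hs_nonneg[of "\<sigma> x"] by linarith
  have M0: "0 \<le> M" using bM[of 0] R' by (smt (verit) norm_ge_zero norm_zero)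
  have "-1 - 2 * (R' * M * \<Delta>) \<le> iota0 b \<sigma> r" if r: "0 < r" "r0 \<le> r" "r \<le> R" for r
  proof -
    define e :: "real^'d" where "e = r *\<^sub>R axis undefined 1"
    have ne: "norm e = r" unfolding e_def using r by simp
    have e0: "e \<noteq> 0" using ne r by auto
    have Cb: "1/\<Delta> \<le> C0 \<sigma> e" "0 < C0 \<sigma> e" using ellipt[OF e0] C0pos[OF e0] ne r by auto
    have eR: "norm e < R'" using ne r unfolding R'_def by linarith
    have "\<bar>B0 b e\<bar> \<le> norm e * norm (b e)" unfolding B0_def by (rule Cauchy_Schwarz_ineq2)
    also have "\<dots> \<le> R' * M" using bM[OF eR] eR M0 R' by (intro mult_mono) auto
    finally have B: "- (R' * M) \<le> B0 b e" by linarith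
    have "1 \<le> C0 \<sigma> e * \<Delta>" using Cb(1) Delta by (simp add: divide_le_eq)
    then have inv: "1 / C0 \<sigma> e \<le> \<Delta>" using Cb(2) by (simp add: divide_le_eq mult.commute)
    have "g e = 2 * (Acoef \<sigma> e / C0 \<sigma> e) - 1 + 2 * (B0 b e * (1 / C0 \<sigma> e))"
      unfolding g_def using Cb by (simp add: field_simps)
    moreover have "0 \<le> Acoef \<sigma> e / C0 \<sigma> e" using Cb(2) Acoef_nonneg[of \<sigma> e] by simp
    moreover have "- (R' * M * \<Delta>) \<le> B0 b e * (1 / C0 \<sigma> e)"
    proof -
      have "- (R' * M) * \<Delta> \<le> - (R' * M) * (1 / C0 \<sigma> e)"
        using inv R' M0 by (intro mult_left_mono_neg) auto
      also have "\<dots> \<le> B0 b e * (1 / C0 \<sigma> e)" using B Cb by (intro mult_right_mono) auto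
      finally show ?thesis by simp
    qed
    ultimately have "-1 - 2 * (R' * M * \<Delta>) \<le> g e" by linarith
    also have "\<dots> \<le> iota0 b \<sigma> r" by (rule iota_ge[OF r(1,2) ne])
    finally show ?thesis .
  qed
  then show ?thesis by blast
qed

lemma ray_ineq:
  assumes u: "norm u = 1" and st: "0 \<le> s" "s \<le> t"
    and G: "\<And>x y. norm x < t + 1 \<Longrightarrow> norm y < t + 1 \<Longrightarrow>
       2 * ((x - y) \<bullet> (b x - b y)) + (hs_norm (\<sigma> x - \<sigma> y))^2 \<le> G * (norm (x - y))^2"
  shows "u \<bullet> b (t *\<^sub>R u) - G / 2 * (t - s) \<le> u \<bullet> b (s *\<^sub>R u)"
proof (cases "s = t")
  case True then show ?thesis by simp
next
  case False
  then have st': "s < t" using st by simp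
  have n1: "norm (t *\<^sub>R u) < t + 1" "norm (s *\<^sub>R u) < t + 1" using u st by auto
  have d: "t *\<^sub>R u - s *\<^sub>R u = (t - s) *\<^sub>R u" by (simp add: scaleR_diff_left)
  have i: "(t *\<^sub>R u - s *\<^sub>R u) \<bullet> (b (t *\<^sub>R u) - b (s *\<^sub>R u)) = (t - s) * (u \<bullet> (b (t *\<^sub>R u) - b (s *\<^sub>R u)))"
    unfolding d by simp
  have nn: "norm (t *\<^sub>R u - s *\<^sub>R u) = t - s" unfolding d using u st' by simp
  have "2 * ((t - s) * (u \<bullet> (b (t *\<^sub>R u) - b (s *\<^sub>R u)))) \<le> G * (t - s)^2"
    using G[OF n1] unfolding i nn by (smt (verit) zero_le_power2)
  then have "2 * (t - s) * (u \<bullet> (b (t *\<^sub>R u) - b (s *\<^sub>R u))) \<le> (t - s) * (G * (t - s))"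
    by (simp add: power2_eq_square algebra_simps)
  then have "(t - s) * (2 * (u \<bullet> (b (t *\<^sub>R u) - b (s *\<^sub>R u)))) \<le> (t - s) * (G * (t - s))"
    by (simp add: algebra_simps)
  then have "2 * (u \<bullet> (b (t *\<^sub>R u) - b (s *\<^sub>R u))) \<le> G * (t - s)"
    using st' mult_le_cancel_left_pos[of "t - s"] by simp
  then show ?thesis by (simp add: inner_diff_right field_simps)
qed

end
context P25 begin

lemma ray_cont:
  assumes "norm u = 1" "0 < t"
  shows "continuous (at t) (\<lambda>s. Acoef \<sigma> (s *\<^sub>R u))" "continuous (at t) (\<lambda>s. C0 \<sigma> (s *\<^sub>R u))"
proof -
  have l: "continuous (at t) (\<lambda>s. s *\<^sub>R u)" by (intro continuous_intros)
  have nz: "t *\<^sub>R u \<noteq> 0" using assms by auto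
  show "continuous (at t) (\<lambda>s. Acoef \<sigma> (s *\<^sub>R u))"
    using continuous_at_compose[OF l cont_coefs(1)[OF C1 C2]] by (simp add: o_def)
  show "continuous (at t) (\<lambda>s. C0 \<sigma> (s *\<^sub>R u))"
    using continuous_at_compose[OF l cont_coefs(2)[OF C1 C2 nz]] by (simp add: o_def)
qed

lemma sphere_unit:
  assumes "norm x = t" "0 < t"
  shows "norm (x /\<^sub>R t) = 1" "t *\<^sub>R (x /\<^sub>R t) = x"
  using assms by auto

lemma iota_left:
  assumes ra: "r0 \<le> ra" "0 < ra" "ra < t" and c: "c < iota0 b \<sigma> t"
  shows "\<exists>h>0. \<forall>s. t - h < s \<and> s \<le> t \<longrightarrow> ra < s \<and> c < iota0 b \<sigma> s"
proof -
  have t: "0 < t" "r0 \<le> t" using ra by auto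
  obtain x where x: "norm x = t" "c < g x"
  proof -
    have ne: "{x::real^'d. norm x = t} \<noteq> {}" using gsphere_ne t by simp
    have "\<exists>x\<in>{x. norm x = t}. c < g x" using less_cSUP_iff[OF ne bdd_g[OF t]] c unfolding iota_eq by blast
    then show ?thesis using that by blast
  qed
  define u where "u = x /\<^sub>R t"
  have u: "norm u = 1" "t *\<^sub>R u = x" unfolding u_def using sphere_unit[OF x(1) t(1)] by auto
  have x0: "x \<noteq> 0" using x t by auto
  obtain G where G: "G > 0" "\<And>x y. norm x < t + 1 \<Longrightarrow> norm y < t + 1 \<Longrightarrow>
       2 * ((x - y) \<bullet> (b x - b y)) + (hs_norm (\<sigma> x - \<sigma> y))^2 \<le> G * (norm (x - y))^2"
    using C2 t by (metis add_pos_pos zero_less_one)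
  define Q where "Q = u \<bullet> b x"
  define \<phi> where "\<phi> s = (2 * Acoef \<sigma> (s *\<^sub>R u) - C0 \<sigma> (s *\<^sub>R u) + 2 * s * (Q - G / 2 * (t - s))) / C0 \<sigma> (s *\<^sub>R u)" for s
  have Cx: "0 < C0 \<sigma> x" using C0pos[OF x0] x t by simp
  have cphi: "continuous (at t) \<phi>"
    unfolding \<phi>_def using ray_cont[OF u(1) t(1)] Cx u(2)
    by (intro continuous_intros) auto
  have "x \<bullet> b x = (t *\<^sub>R u) \<bullet> b x" using u(2) by simp
  then have Bx: "B0 b x = t * Q" unfolding B0_def Q_def by simp
  have phit: "\<phi> t = g x"
    unfolding \<phi>_def g_def Bx u(2) by simp
  have "eventually (\<lambda>s. c < \<phi> s) (at t)"
    using order_tendstoD(1)[OF cphi[unfolded continuous_at]] x(2) phit by simp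
  then obtain d where d: "d > 0" "\<And>s. s \<noteq> t \<Longrightarrow> dist s t < d \<Longrightarrow> c < \<phi> s"
    unfolding eventually_at by auto
  have phis: "c < \<phi> s" if "t - d < s" "s \<le> t" for s
  proof (cases "s = t")
    case True then show ?thesis using phit x(2) by simp
  next
    case False then show ?thesis using d that by (auto simp: dist_real_def)
  qed
  show ?thesis
  proof (rule exI[of _ "min d (t - ra)"], rule conjI)
    show "0 < min d (t - ra)" using d ra by simp
  next
    show "\<forall>s. t - min d (t - ra) < s \<and> s \<le> t \<longrightarrow> ra < s \<and> c < iota0 b \<sigma> s"
    proof (intro allI impI)
    fix s assume s: "t - min d (t - ra) < s \<and> s \<le> t"
    then have s1: "ra < s" "s \<le> t" "t - d < s" by auto
    have ns: "norm (s *\<^sub>R u) = s" using u s1 ra by simp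
    have y0: "s *\<^sub>R u \<noteq> 0" using ns s1 ra by auto
    have Cy: "0 < C0 \<sigma> (s *\<^sub>R u)" using C0pos[OF y0] ns s1 ra by simp
    have P: "Q - G / 2 * (t - s) \<le> u \<bullet> b (s *\<^sub>R u)"
      using ray_ineq[OF u(1) _ s1(2) G(2)] s1 ra u(2) unfolding Q_def by simp
    have "2 * s * (Q - G / 2 * (t - s)) \<le> 2 * B0 b (s *\<^sub>R u)"
      unfolding B0_def using P s1 ra by (simp add: mult_left_mono)
    then have "\<phi> s \<le> g (s *\<^sub>R u)"
      unfolding \<phi>_def g_def using Cy by (intro divide_right_mono) auto
    also have "\<dots> \<le> iota0 b \<sigma> s" using iota_ge[OF _ _ ns] s1 ra by simp
    finally show "ra < s \<and> c < iota0 b \<sigma> s" using phis[OF s1(3,2)] s1 by simp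
    qed
  qed
qed

lemma gamma_left:
  assumes ra: "r0 \<le> ra" "0 < ra" "ra < t" and c: "gamma0 \<sigma> t < c"
  shows "\<exists>h>0. \<forall>s. t - h < s \<and> s \<le> t \<longrightarrow> ra < s \<and> gamma0 \<sigma> s < c"
proof -
  have t: "0 < t" "r0 \<le> t" using ra by auto
  obtain x where x: "norm x = t" "C0 \<sigma> x < c"
  proof -
    have ne: "{x::real^'d. norm x = t} \<noteq> {}" using gsphere_ne t by simp
    have "\<exists>x\<in>{x. norm x = t}. C0 \<sigma> x < c" using cINF_less_iff[OF ne bdd_C0[OF t]] c unfolding gamma0_def by blast
    then show ?thesis using that by blast
  qed
  define u where "u = x /\<^sub>R t"
  have u: "norm u = 1" "t *\<^sub>R u = x" unfolding u_def using sphere_unit[OF x(1) t(1)] by auto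
  have cc: "continuous (at t) (\<lambda>s. C0 \<sigma> (s *\<^sub>R u))" using ray_cont[OF u(1) t(1)] by simp
  have "eventually (\<lambda>s. C0 \<sigma> (s *\<^sub>R u) < c) (at t)"
    using order_tendstoD(2)[OF cc[unfolded continuous_at]] x(2) u(2) by simp
  then obtain d where d: "d > 0" "\<And>s. s \<noteq> t \<Longrightarrow> dist s t < d \<Longrightarrow> C0 \<sigma> (s *\<^sub>R u) < c"
    unfolding eventually_at by auto
  show ?thesis
  proof (rule exI[of _ "min d (t - ra)"], rule conjI)
    show "0 < min d (t - ra)" using d ra by simp
  next
    show "\<forall>s. t - min d (t - ra) < s \<and> s \<le> t \<longrightarrow> ra < s \<and> gamma0 \<sigma> s < c"
    proof (intro allI impI)
    fix s assume s: "t - min d (t - ra) < s \<and> s \<le> t"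
    then have s1: "ra < s" "s \<le> t" "t - d < s" by auto
    have ns: "norm (s *\<^sub>R u) = s" using u s1 ra by simp
    have "C0 \<sigma> (s *\<^sub>R u) < c"
    proof (cases "s = t")
      case True then show ?thesis using x(2) u(2) by simp
    next
      case False then show ?thesis using d s1 by (auto simp: dist_real_def)
    qed
    moreover have "gamma0 \<sigma> s \<le> C0 \<sigma> (s *\<^sub>R u)" using gamma_le[OF _ _ ns] s1 ra by simp
    ultimately show "ra < s \<and> gamma0 \<sigma> s < c" using s1 by simp
    qed
  qed
qed

end
context P25 begin

lemma iota_borel:
  assumes ra: "r0 \<le> ra" "0 < ra"
  shows "(\<lambda>s. if ra < s then iota0 b \<sigma> s else 0) \<in> borel_measurable borel"
  unfolding borel_measurable_iff_greater
proof
  fix a :: real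
  let ?f = "\<lambda>s. if ra < s then iota0 b \<sigma> s else 0"
  have "{x. a < ?f x} \<in> sets borel"
  proof (rule leftopen_borel)
    fix t assume "t \<in> {x. a < ?f x}"
    then have ta: "a < ?f t" by simp
    show "\<exists>h>0. \<forall>s. t - h < s \<and> s \<le> t \<longrightarrow> s \<in> {x. a < ?f x}"
    proof (cases "ra < t")
      case True
      then obtain h where "h > 0" "\<forall>s. t - h < s \<and> s \<le> t \<longrightarrow> ra < s \<and> a < iota0 b \<sigma> s"
        using iota_left[OF ra True] ta by auto
      then show ?thesis by auto
    next
      case False
      then have "a < 0" using ta by simp
      then show ?thesis using False by (intro exI[of _ 1]) auto
    qed
  qed
  then show "{x \<in> space borel. a < ?f x} \<in> sets borel" by simp
qed

lemma kk_borel: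
  assumes ra: "r0 \<le> ra" "0 < ra"
  shows "(\<lambda>s. if ra < s then 1 / gamma0 \<sigma> s else 0) \<in> borel_measurable borel"
  unfolding borel_measurable_iff_greater
proof
  fix a :: real
  let ?f = "\<lambda>s. if ra < s then 1 / gamma0 \<sigma> s else 0"
  have gpos: "0 < gamma0 \<sigma> s" if "ra < s" for s
    using gamma_lower[of s] that ra Delta by (smt (verit) divide_pos_pos)
  have "{x. a < ?f x} \<in> sets borel"
  proof (rule leftopen_borel)
    fix t assume "t \<in> {x. a < ?f x}"
    then have ta: "a < ?f t" by simp
    show "\<exists>h>0. \<forall>s. t - h < s \<and> s \<le> t \<longrightarrow> s \<in> {x. a < ?f x}"
    proof (cases "ra < t")
      case True
      define c where "c = (if a \<le> 0 then gamma0 \<sigma> t + 1 else 1 / a)"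
      have "gamma0 \<sigma> t < c"
      proof (cases "a \<le> 0")
        case False
        then have "a < 1 / gamma0 \<sigma> t" using ta True by simp
        then show ?thesis unfolding c_def using False gpos[OF True]
          by (simp add: field_simps)
      qed (simp add: c_def)
      then obtain h where h: "h > 0" "\<forall>s. t - h < s \<and> s \<le> t \<longrightarrow> ra < s \<and> gamma0 \<sigma> s < c"
        using gamma_left[OF ra True] by blast
      have "a < ?f s" if "t - h < s" "s \<le> t" for s
      proof -
        have s: "ra < s" "gamma0 \<sigma> s < c" using h that by auto
        show ?thesis
        proof (cases "a \<le> 0")
          case True
          have h1: "0 < 1 / gamma0 \<sigma> s" using gpos[OF s(1)] by simp
          have "?f s = 1 / gamma0 \<sigma> s" using s(1) by simp
          then show ?thesis using h1 True by linarith
        next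
          case False
          then have "gamma0 \<sigma> s < 1 / a" using s c_def by simp
          then show ?thesis using s gpos[OF s(1)] False by (simp add: field_simps)
        qed
      qed
      then have "\<forall>s. t - h < s \<and> s \<le> t \<longrightarrow> s \<in> {x. a < ?f x}" by blast
      then show ?thesis using h(1) by blast
    next
      case False
      then have "a < 0" using ta by simp
      then have "a < ?f s" for s using gpos by (simp add: less_le_trans[OF _ less_imp_le])
      then show ?thesis by (intro exI[of _ 1]) auto
    qed
  qed
  then show "{x \<in> space borel. a < ?f x} \<in> sets borel" by simp
qed

lemma iota_integrable:
  assumes ra: "r0 \<le> ra" "0 < ra"
  shows "(\<lambda>s. iota0 b \<sigma> s / s) integrable_on {ra..R}"
proof -
  obtain L where L: "\<And>r. 0 < r \<Longrightarrow> r0 \<le> r \<Longrightarrow> r \<le> R \<Longrightarrow> L \<le> iota0 b \<sigma> r"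
    using iota_lower[of R] by blast
  define B where "B = (\<bar>L\<bar> + \<bar>1 - \<gamma>\<bar>) / ra"
  let ?f = "\<lambda>s. (if ra < s then iota0 b \<sigma> s else 0) / s"
  have fb: "?f \<in> borel_measurable borel"
    using iota_borel[OF ra] by measurable
  have "?f integrable_on {ra..R}"
  proof (rule measurable_bounded_by_integrable_imp_integrable_real)
    show "?f \<in> borel_measurable (lebesgue_on {ra..R})" by (rule borel_to_lebesgue_on[OF fb])
    show "(\<lambda>_. B) integrable_on {ra..R}" by (rule integrable_continuous_interval) (rule continuous_on_const)
    show "{ra..R} \<in> sets lebesgue" by simp
    fix s assume s: "s \<in> {ra..R}"
    show "\<bar>?f s\<bar> \<le> B"
    proof (cases "ra < s")
      case True
      have s0: "0 < s" "r0 \<le> s" "s \<le> R" using s ra by auto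
      have up: "iota0 b \<sigma> s \<le> 1 - \<gamma>"
        using iota_upper[OF s0(1,2)] Gamma Delta
        by (smt (verit) divide_nonneg_pos mult_nonneg_nonneg powr_ge_zero)
      have "\<bar>iota0 b \<sigma> s\<bar> \<le> \<bar>L\<bar> + \<bar>1 - \<gamma>\<bar>" using up L[OF s0] by linarith
      then have "\<bar>iota0 b \<sigma> s\<bar> / s \<le> (\<bar>L\<bar> + \<bar>1 - \<gamma>\<bar>) / ra"
        using s0 ra s by (intro frac_le) auto
      then show ?thesis using True s0 unfolding B_def by simp
    next
      case False then show ?thesis unfolding B_def using ra by simp
    qed
  qed
  then show ?thesis
    by (rule integrable_spike_finite[of "{ra}", rotated 2]) auto
qed

end
lemma tail_bound:
  fixes a c p \<alpha> :: real
  assumes a: "0 < a" and c: "0 < c" and p: "0 < p"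
  shows "\<exists>M. \<forall>u\<ge>a. (u - a + 1) powr \<alpha> * exp (- (c * (u powr p - a powr p))) \<le> M * u powr -2"
proof -
  define H where "H u = (u - a + 1) powr \<alpha> * exp (- (c * (u powr p - a powr p)))" for u
  have "((\<lambda>u. u powr 2 * H u) \<longlongrightarrow> 0) at_top"
    unfolding H_def using c p by real_asymp
  then have "eventually (\<lambda>u. u powr 2 * H u < 1) at_top"
    by (rule order_tendstoD(2)) simp
  then obtain N where N: "\<And>u. u \<ge> N \<Longrightarrow> u powr 2 * H u < 1"
    unfolding eventually_at_top_linorder by auto
  define R where "R = max a N"
  have cont: "continuous_on {a..R} (\<lambda>u. u powr 2 * H u)"
    unfolding H_def using a by (intro continuous_intros) auto
  have ne: "{a..R} \<noteq> {}" unfolding R_def by simp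
  obtain x where "x \<in> {a..R}" "\<forall>y\<in>{a..R}. y powr 2 * H y \<le> x powr 2 * H x"
    using continuous_attains_sup[OF compact_Icc ne cont] by blast
  then have M1: "\<And>y. y \<in> {a..R} \<Longrightarrow> y powr 2 * H y \<le> x powr 2 * H x" by blast
  define M where "M = max 1 (x powr 2 * H x)"
  have "H u \<le> M * u powr -2" if u: "u \<ge> a" for u
  proof -
    have "u powr 2 * H u \<le> M"
    proof (cases "u \<le> R")
      case True then show ?thesis using M1[of u] u unfolding M_def by auto
    next
      case False
      then have "N \<le> u" unfolding R_def by simp
      then have "u powr 2 * H u < 1" by (rule N)
      then show ?thesis unfolding M_def by linarith
    qed
    moreover have "u powr 2 > 0" using u a by simp
    ultimately have "H u \<le> M / u powr 2" by (simp add: field_simps)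
    then show ?thesis by (simp add: powr_minus divide_inverse)
  qed
  then show ?thesis unfolding H_def by blast
qed
context P25 begin

lemma main:
  "\<exists>r'\<ge>r0. (\<forall>r\<ge>r'. (\<lambda>s. iota0 b \<sigma> s / s) integrable_on {r'..r}) \<and>
     (\<forall>u\<ge>r'. (\<lambda>v. exp (- integral {r'..v} (\<lambda>s. iota0 b \<sigma> s / s))) integrable_on {r'..u}) \<and>
     (\<lambda>u. (integral {r'..u} (\<lambda>v. exp (- integral {r'..v} (\<lambda>s. iota0 b \<sigma> s / s))) + 1) powr \<alpha>
         * exp (integral {r'..u} (\<lambda>s. iota0 b \<sigma> s / s)) / gamma0 \<sigma> u) integrable_on {r'..}"
proof -
  define K where "K = \<Gamma> / \<Delta>"
  have K: "0 < K" using Gamma Delta unfolding K_def by simp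
  have pp: "0 < p" by (rule p_pos)
  define r' where "r' = max (max r0 1) ((\<Delta> * \<bar>1 - \<gamma>\<bar> / \<Gamma>) powr (1/p))"
  have r': "r0 \<le> r'" "1 \<le> r'" "0 < r'" unfolding r'_def by auto
  have neg: "iota0 b \<sigma> s \<le> - K * s powr p" if s: "r' \<le> s" for s
  proof -
    have s0: "0 < s" "r0 \<le> s" using s r' by auto
    have ss: "(\<Delta> * \<bar>1 - \<gamma>\<bar> / \<Gamma>) powr (1/p) \<le> s" using s unfolding r'_def by simp
    have "((\<Delta> * \<bar>1 - \<gamma>\<bar> / \<Gamma>) powr (1/p)) powr p \<le> s powr p"
      using powr_mono2[OF _ _ ss, of p] pp by auto
    moreover have "((\<Delta> * \<bar>1 - \<gamma>\<bar> / \<Gamma>) powr (1/p)) powr p = \<Delta> * \<bar>1 - \<gamma>\<bar> / \<Gamma>"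
      using pp Gamma Delta by (simp add: powr_powr)
    ultimately have "\<Delta> * \<bar>1 - \<gamma>\<bar> / \<Gamma> \<le> s powr p" by simp
    then have "K * (\<Delta> * \<bar>1 - \<gamma>\<bar> / \<Gamma>) \<le> K * s powr p" using K by (intro mult_left_mono) auto
    moreover have "K * (\<Delta> * \<bar>1 - \<gamma>\<bar> / \<Gamma>) = \<bar>1 - \<gamma>\<bar>" unfolding K_def using Gamma Delta by simp
    ultimately have "1 - \<gamma> \<le> K * s powr p" by linarith
    moreover have "2 * \<Gamma> * s powr p / \<Delta> = 2 * (K * s powr p)" unfolding K_def by simp
    ultimately show ?thesis using iota_upper[OF s0] by linarith
  qed
  define f where "f s = iota0 b \<sigma> s / s" for s
  define I0 where "I0 u = integral {r'..u} f" for u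
  have fint: "f integrable_on {r'..R}" for R unfolding f_def by (rule iota_integrable[OF r'(1,3)])
  have fneg: "f s \<le> - K * s powr (p - 1)" if "r' \<le> s" for s
  proof -
    have s0: "0 < s" using that r' by simp
    have "f s \<le> (- K * s powr p) / s" unfolding f_def
      by (rule divide_right_mono[OF neg[OF that]]) (use s0 in simp)
    also have "(- K * s powr p) / s = - K * (s powr p / s)" by simp
    also have "s powr p / s = s powr (p - 1)" using s0 by (simp add: powr_diff)
    finally show ?thesis .
  qed
  have fle0: "f s \<le> 0" if "r' \<le> s" for s
  proof -
    have "0 \<le> K * s powr (p - 1)" using K by simp
    then show ?thesis using fneg[OF that] by simp
  qed
  have I0cont: "continuous_on {r'..R} I0" for R unfolding I0_def by (rule indefinite_integral_continuous_1[OF fint])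
  have I0le: "I0 u \<le> - (K / p) * (u powr p - r' powr p)" if u: "r' \<le> u" for u
  proof -
    have d: "((\<lambda>s. K / p * s powr p) has_vector_derivative K * s powr (p - 1)) (at s within {r'..u})"
      if "s \<in> {r'..u}" for s
    proof -
      have "0 < s" using that r' by simp
      then show ?thesis using pp
        by (auto intro!: derivative_eq_intros simp flip: has_real_derivative_iff_has_vector_derivative)
    qed
    have "((\<lambda>s. K * s powr (p - 1)) has_integral (K / p * u powr p - K / p * r' powr p)) {r'..u}"
      by (rule fundamental_theorem_of_calculus[OF u d])
    then have hi: "((\<lambda>s. - (K * s powr (p - 1))) has_integral - (K / p * u powr p - K / p * r' powr p)) {r'..u}"
      by (rule has_integral_neg)
    have "I0 u \<le> - (K / p * u powr p - K / p * r' powr p)"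
      unfolding I0_def by (rule has_integral_le[OF integrable_integral[OF fint] hi]) (use fneg in auto)
    then show ?thesis by (simp add: algebra_simps)
  qed
  have I0nonpos: "I0 u \<le> 0" if u: "r' \<le> u" for u
  proof -
    have "r' powr p \<le> u powr p" using u r' pp by (intro powr_mono2) auto
    then have "0 \<le> (K / p) * (u powr p - r' powr p)" using K pp by simp
    then show ?thesis using I0le[OF u] by linarith
  qed
  have I0mono: "I0 u \<le> I0 v" if "r' \<le> v" "v \<le> u" for u v
  proof -
    have "I0 v + integral {v..u} f = I0 u" unfolding I0_def
      by (rule Henstock_Kurzweil_Integration.integral_combine[OF that fint])
    moreover have "integral {v..u} f \<le> 0"
    proof -
      have "f integrable_on {v..u}" by (rule integrable_on_subinterval[OF fint[of u]]) (use that in auto)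
      then have "integral {v..u} f \<le> integral {v..u} (\<lambda>_. 0::real)"
        by (rule integral_le) (use fle0 that in auto)
      then show ?thesis by simp
    qed
    ultimately show ?thesis by linarith
  qed
  have eint: "(\<lambda>v. exp (- I0 v)) integrable_on {r'..u}" for u
    by (rule integrable_continuous_interval) (intro continuous_intros I0cont)
  define J where "J u = integral {r'..u} (\<lambda>v. exp (- I0 v))" for u
  have Jcont: "continuous_on {r'..R} J" for R unfolding J_def by (rule indefinite_integral_continuous_1[OF eint])
  have Jnn: "0 \<le> J u" for u unfolding J_def by (rule integral_nonneg[OF eint]) simp
  have Jle: "J u \<le> (u - r') * exp (- I0 u)" if u: "r' \<le> u" for u
  proof -
    have "J u \<le> integral {r'..u} (\<lambda>_. exp (- I0 u))" unfolding J_def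
      by (rule integral_le[OF eint]) (use I0mono u in auto)
    then show ?thesis using u by simp
  qed
  define F where "F u = (J u + 1) powr \<alpha> * exp (I0 u) / gamma0 \<sigma> u" for u
  define c where "c = (1 - \<alpha>) * (K / p)"
  have cpos: "0 < c" unfolding c_def using alpha K pp by simp
  have gpos: "0 < gamma0 \<sigma> u" "1 / gamma0 \<sigma> u \<le> \<Delta>" if u: "r' \<le> u" for u
  proof -
    have g: "1 / \<Delta> \<le> gamma0 \<sigma> u" using gamma_lower[of u] u r' by simp
    then show "0 < gamma0 \<sigma> u" using Delta by (smt (verit) divide_pos_pos)
    then show "1 / gamma0 \<sigma> u \<le> \<Delta>" using g Delta by (simp add: divide_le_eq field_simps)
  qed
  have Fnn: "0 \<le> F u" if u: "r' \<le> u" for u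
    unfolding F_def using gpos[OF u] by simp
  have Fbound: "F u \<le> \<Delta> * ((u - r' + 1) powr \<alpha> * exp (- (c * (u powr p - r' powr p))))" if u: "r' \<le> u" for u
  proof -
    define e where "e = exp (- I0 u)"
    have e1: "1 \<le> e" unfolding e_def using I0nonpos[OF u] by simp
    have "(u - r' + 1) * e = (u - r') * e + e" by (simp add: algebra_simps)
    then have Je: "J u + 1 \<le> (u - r' + 1) * e" using Jle[OF u] e1 unfolding e_def by linarith
    have "(J u + 1) powr \<alpha> \<le> ((u - r' + 1) * e) powr \<alpha>"
      using powr_mono2[OF _ _ Je, of \<alpha>] alpha Jnn[of u] by (smt (verit))
    also have "\<dots> = (u - r' + 1) powr \<alpha> * exp (- \<alpha> * I0 u)"
    proof -
      have "0 < u - r' + 1" using u by simp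
      then show ?thesis
      proof -
        have "((u - r' + 1) * e) powr \<alpha> = exp (\<alpha> * (ln (u - r' + 1) - I0 u))"
          using \<open>0 < u - r' + 1\<close> by (simp add: e_def powr_def ln_mult)
        also have "\<alpha> * (ln (u - r' + 1) - I0 u) = \<alpha> * ln (u - r' + 1) + (- \<alpha> * I0 u)"
          by (simp add: algebra_simps)
        also have "exp (\<alpha> * ln (u - r' + 1) + (- \<alpha> * I0 u)) = exp (\<alpha> * ln (u - r' + 1)) * exp (- \<alpha> * I0 u)"
          by (rule exp_add)
        finally show ?thesis using \<open>0 < u - r' + 1\<close> by (simp only: powr_def) simp
      qed
    qed
    finally have A: "(J u + 1) powr \<alpha> \<le> (u - r' + 1) powr \<alpha> * exp (- \<alpha> * I0 u)" .
    have "F u = (J u + 1) powr \<alpha> * exp (I0 u) * (1 / gamma0 \<sigma> u)" unfolding F_def by simp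
    also have "\<dots> \<le> ((u - r' + 1) powr \<alpha> * exp (- \<alpha> * I0 u)) * exp (I0 u) * \<Delta>"
      using A gpos[OF u] by (intro mult_mono) auto
    also have "\<dots> = \<Delta> * ((u - r' + 1) powr \<alpha> * exp ((1 - \<alpha>) * I0 u))"
      by (simp add: algebra_simps flip: exp_add)
    also have "\<dots> \<le> \<Delta> * ((u - r' + 1) powr \<alpha> * exp (- (c * (u powr p - r' powr p))))"
    proof -
      have "(1 - \<alpha>) * I0 u \<le> (1 - \<alpha>) * (- (K / p) * (u powr p - r' powr p))"
        using I0le[OF u] alpha by (intro mult_left_mono) auto
      then have "exp ((1 - \<alpha>) * I0 u) \<le> exp (- (c * (u powr p - r' powr p)))"
        unfolding c_def by simp
      then show ?thesis using Delta by (intro mult_left_mono) auto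
    qed
    finally show ?thesis .
  qed
  obtain M where M: "\<And>u. u \<ge> r' \<Longrightarrow> (u - r' + 1) powr \<alpha> * exp (- (c * (u powr p - r' powr p))) \<le> M * u powr -2"
    using tail_bound[OF r'(3) cpos pp, of \<alpha>] by blast
  have Fle: "F u \<le> (\<Delta> * M) * u powr -2" if u: "r' \<le> u" for u
    using Fbound[OF u] M[OF u] Delta by (smt (verit) mult.assoc mult_left_mono)
  have gint: "(\<lambda>u. (\<Delta> * M) * u powr -2) integrable_on {r'..}"
  proof -
    have "(\<lambda>u. u powr -2) integrable_on {r'..}"
      using has_integral_powr_to_inf[of "-2" r'] r' unfolding integrable_on_def by auto
    from integrable_on_cmult_left[OF this, of "\<Delta> * M"] show ?thesis by simp
  qed
  define kk where "kk s = (if r' < s then 1 / gamma0 \<sigma> s else 0)" for s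
  have kkb: "kk \<in> borel_measurable borel" unfolding kk_def by (rule kk_borel[OF r'(1,3)])
  have Fint: "F integrable_on {r'..}"
  proof (rule integrable_on_all_intervals_integrable_bound[OF _ _ gint])
    show "norm (F x) \<le> \<Delta> * M * x powr -2" if "x \<in> {r'..}" for x
      using Fle[of x] Fnn[of x] that by simp
    fix a b :: real
    define a' where "a' = max r' a"
    have eq: "{r'..} \<inter> cbox a b = {a'..b}" unfolding a'_def by auto
    define F' where "F' u = (J u + 1) powr \<alpha> * exp (I0 u) * kk u" for u
    have cF: "continuous_on {a'..b} (\<lambda>u. (J u + 1) powr \<alpha> * exp (I0 u))"
    proof (rule continuous_on_subset[of "{r'..b}"])
      show "continuous_on {r'..b} (\<lambda>u. (J u + 1) powr \<alpha> * exp (I0 u))"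
        using Jnn by (intro continuous_intros Jcont I0cont) (auto simp: add_nonneg_pos, smt (verit) Jnn)
      show "{a'..b} \<subseteq> {r'..b}" unfolding a'_def by auto
    qed
    have "F' integrable_on {a'..b}"
    proof (rule measurable_bounded_by_integrable_imp_integrable_real)
      show "F' \<in> borel_measurable (lebesgue_on {a'..b})"
        unfolding F'_def
        by (intro borel_measurable_times continuous_imp_measurable_on_sets_lebesgue[OF cF] borel_to_lebesgue_on kkb) simp
      show "(\<lambda>u. (\<Delta> * M) * u powr -2) integrable_on {a'..b}"
        by (rule integrable_on_subinterval[OF gint]) (auto simp: a'_def)
      show "{a'..b} \<in> sets lebesgue" by simp
      fix u assume u: "u \<in> {a'..b}"
      then have ur: "r' \<le> u" unfolding a'_def by simp
      show "\<bar>F' u\<bar> \<le> \<Delta> * M * u powr -2"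
      proof (cases "r' < u")
        case True
        then have "F' u = F u" unfolding F'_def F_def kk_def by simp
        then show ?thesis using Fle[OF ur] Fnn[OF ur] by simp
      next
        case False
        have "0 \<le> F u" by (rule Fnn[OF ur])
        then have "0 \<le> \<Delta> * M * u powr -2" using Fle[OF ur] by linarith
        then show ?thesis using False unfolding F'_def kk_def by simp
      qed
    qed
    then have "F integrable_on {a'..b}"
    proof (rule integrable_spike_finite[of "{r'}", rotated 2])
      fix u assume "u \<in> {a'..b} - {r'}"
      then have "r' < u" unfolding a'_def by auto
      then show "F u = F' u" unfolding F'_def F_def kk_def by simp
    qed simp
    then show "(\<lambda>x. if x \<in> {r'..} then F x else 0) integrable_on cbox a b"
      unfolding integrable_restrict_Int eq .
  qed
  show ?thesis
    using r'(1) fint eint Fint unfolding f_def I0_def J_def F_def by blast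
qed

end

theorem proposition2p5:
  fixes b :: "real^'d \<Rightarrow> real^'d"
    and \<sigma> :: "real^'d \<Rightarrow> real^'n^'d"
    and \<alpha> \<gamma> \<Gamma> r0 \<Delta> :: real
  assumes b_meas: "b \<in> borel_measurable borel"
    and \<sigma>_meas: "\<sigma> \<in> borel_measurable borel"
    and C1: "\<forall>r>0. \<exists>M. \<forall>x. norm x < r \<longrightarrow> norm (b x) + hs_norm (\<sigma> x) \<le> M"
    and C2: "\<forall>r>0. \<exists>\<Gamma>r>0. \<forall>x y. norm x < r \<longrightarrow> norm y < r \<longrightarrow>
               2 * ((x - y) \<bullet> (b x - b y)) + (hs_norm (\<sigma> x - \<sigma> y))^2 \<le> \<Gamma>r * (norm (x - y))^2"
    and C3: "\<exists>\<Gamma>3>0. \<forall>x. 2 * (x \<bullet> b x) + (hs_norm (\<sigma> x))^2 \<le> \<Gamma>3 * (1 + (norm x)^2)"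
    and alpha: "0 < \<alpha>" "\<alpha> < 1"
    and gamma: "0 < \<gamma>" "\<gamma> < 2 / (1 - \<alpha>)"
    and Gamma: "0 < \<Gamma>"
    and r0: "0 \<le> r0"
    and drift: "\<And>x. x \<noteq> 0 \<Longrightarrow> norm x \<ge> r0 \<Longrightarrow>
        Acoef \<sigma> x - (1 - \<gamma> / 2) * C0 \<sigma> x + B0 b x \<le> - \<Gamma> * norm x powr (\<gamma> * \<alpha> - \<gamma> + 2)"
    and Delta: "1 \<le> \<Delta>"
    and ellipt: "\<And>x. x \<noteq> 0 \<Longrightarrow> norm x \<ge> r0 \<Longrightarrow> 1 / \<Delta> \<le> C0 \<sigma> x \<and> C0 \<sigma> x \<le> \<Delta>"
  shows "\<exists>r'\<ge>r0.
     let I0 = (\<lambda>r. integral {r'..r} (\<lambda>s. iota0 b \<sigma> s / s)) in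
       (\<forall>r\<ge>r'. (\<lambda>s. iota0 b \<sigma> s / s) integrable_on {r'..r}) \<and>
       (\<forall>u\<ge>r'. (\<lambda>v. exp (- I0 v)) integrable_on {r'..u}) \<and>
       (\<lambda>u. (integral {r'..u} (\<lambda>v. exp (- I0 v)) + 1) powr \<alpha> * exp (I0 u) / gamma0 \<sigma> u)
          integrable_on {r'..}"
proof -
  interpret P25 b \<sigma> \<alpha> \<gamma> \<Gamma> r0 \<Delta>
    by (unfold_locales) (use assms in auto)
  show ?thesis using main unfolding Let_def by blast
qed

end
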